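(* Let $\mathcal{X},\mathcal{Y}$ be finite sets, $P$ a strictly positive joint pmf on $\mathcal{X}\times\mathcal{Y}$, $\rho>0$ and $q\in\mathbb{R}\setminus\{0\}$. Let $G$ be any conditional guessing function and let $Q^{(G)}(x,y)=\frac{1}{|\mathcal{Y}|\,s\,G(x|y)^{(1+\rho)/q}}$ with $s=\sum_{i=1}^{|\mathcal{X}|}i^{-(1+\rho)/q}$. Then $$ \left|R_{q,\rho}(P,G)-q\,\mathcal{RE}_{(\frac{q}{1+\rho},q)}(P,Q^{(G)})\right|\;\leq\;\ln(1+\ln|\mathcal{X}|). $$
   Context: A conditional guessing function is a map $G(\cdot|\cdot)$ on $\mathcal{X}\times\mathcal{Y}$ such that for each $y$, $x\mapsto G(x|y)$ is a bijection from $\mathcal{X}$ onto $\{1,\dots,|\mathcal{X}|\}$. The $q$-normalized expectation under $P$ is $E_q[F(X,Y)]=\frac{\sum_{x,y}F(x,y)P(x,y)^q}{\sum_{x,y}P(x,y)^q}$. With $P(x|y)=P(x,y)/\sum_{x'}P(x',y)$ and $P_q(x|y)=P(x|y)^q/\sum_{x'}P(x'|y)^q$, let $G^\ast_P$ be any conditional guessing function such that $G^\ast_P(x|y)<G^\ast_P(x'|y)$ implies $P_q(x|y)\ge P_q(x'|y)$. The redundancy is $R_{q,\rho}(P,G)=\frac1\rho\ln E_q[G(X|Y)^\rho]-\frac1\rho\ln E_q[G^\ast_P(X|Y)^\rho]$, expectations w.r.t. $P$. For strictly positive joint pmfs $P,Q$ on $\mathcal{X}\times\mathcal{Y}$ and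 $\alpha\neq\beta$ with $\alpha\beta\neq 0$, the conditional relative $(\alpha,\beta)$-entropy is $$\mathcal{RE}_{(\alpha,\beta)}(P,Q)=\frac{\alpha}{\beta(\beta-\alpha)}\ln\frac{\sum_{y}\left\{\sum_{x}P(x,y)^\beta Q(x,y)^{\alpha-\beta}\right\}\left\{\sum_{x}Q(x,y)^{\alpha}\right\}^{\frac{\beta}{\alpha}-1}}{\sum_{y}\left\{\sum_{x}P(x,y)^\alpha\right\}^{\frac{\beta}{\alpha}}};$$ in particular $q\,\mathcal{RE}_{(\frac{q}{1+\rho},q)}(P,Q)=\frac1\rho\ln\frac{\sum_y\{\sum_x P(x,y)^qQ(x,y)^{\alpha-q}\}\{\sum_xQ(x,y)^\alpha\}^{\rho}}{\sum_y\{\sum_xP(x,y)^\alpha\}^{1+\rho}}$ with $\alpha=\frac{q}{1+\rho}$. *)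

theory Defs
  imports Complex_Main "HOL-Library.Cardinality"
begin

definition cond_guessing :: "('x::finite \<Rightarrow> 'y \<Rightarrow> nat) \<Rightarrow> bool" where
  "cond_guessing G \<longleftrightarrow> (\<forall>y. bij_betw (\<lambda>x. G x y) UNIV {1..CARD('x)})"

definition Eq :: "real \<Rightarrow> ('x::finite \<Rightarrow> 'y::finite \<Rightarrow> real) \<Rightarrow> ('x \<Rightarrow> 'y \<Rightarrow> real) \<Rightarrow> real" where
  "Eq q P F = (\<Sum>x\<in>UNIV. \<Sum>y\<in>UNIV. F x y * P x y powr q) / (\<Sum>x\<in>UNIV. \<Sum>y\<in>UNIV. P x y powr q)"

definition cond_prob :: "('x::finite \<Rightarrow> 'y \<Rightarrow> real) \<Rightarrow> 'x \<Rightarrow> 'y \<Rightarrow> real" where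
  "cond_prob P x y = P x y / (\<Sum>x'\<in>UNIV. P x' y)"

definition cond_prob_q :: "real \<Rightarrow> ('x::finite \<Rightarrow> 'y \<Rightarrow> real) \<Rightarrow> 'x \<Rightarrow> 'y \<Rightarrow> real" where
  "cond_prob_q q P x y = cond_prob P x y powr q / (\<Sum>x'\<in>UNIV. cond_prob P x' y powr q)"

definition optimal_guessing :: "real \<Rightarrow> ('x::finite \<Rightarrow> 'y \<Rightarrow> real) \<Rightarrow> ('x \<Rightarrow> 'y \<Rightarrow> nat) \<Rightarrow> bool" where
  "optimal_guessing q P G \<longleftrightarrow> cond_guessing G \<and>
     (\<forall>y x x'. G x y < G x' y \<longrightarrow> cond_prob_q q P x y \<ge> cond_prob_q q P x' y)"

text \<open>Redundancy R_{q,\<rho>}(P,G), relative to a chosen optimal Gs = G*_P.\<close>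
definition redundancy :: "real \<Rightarrow> real \<Rightarrow> ('x::finite \<Rightarrow> 'y::finite \<Rightarrow> real)
    \<Rightarrow> ('x \<Rightarrow> 'y \<Rightarrow> nat) \<Rightarrow> ('x \<Rightarrow> 'y \<Rightarrow> nat) \<Rightarrow> real" where
  "redundancy q \<rho> P G Gs =
     1 / \<rho> * ln (Eq q P (\<lambda>x y. real (G x y) powr \<rho>))
     - 1 / \<rho> * ln (Eq q P (\<lambda>x y. real (Gs x y) powr \<rho>))"

definition cond_rel_entropy :: "real \<Rightarrow> real \<Rightarrow> ('x::finite \<Rightarrow> 'y::finite \<Rightarrow> real)
    \<Rightarrow> ('x \<Rightarrow> 'y \<Rightarrow> real) \<Rightarrow> real" where
  "cond_rel_entropy \<alpha> \<beta> P Q =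
     \<alpha> / (\<beta> * (\<beta> - \<alpha>)) *
     ln ((\<Sum>y\<in>UNIV. (\<Sum>x\<in>UNIV. P x y powr \<beta> * Q x y powr (\<alpha> - \<beta>))
                     * (\<Sum>x\<in>UNIV. Q x y powr \<alpha>) powr (\<beta> / \<alpha> - 1))
         / (\<Sum>y\<in>UNIV. (\<Sum>x\<in>UNIV. P x y powr \<alpha>) powr (\<beta> / \<alpha>)))"

definition guess_pmf :: "real \<Rightarrow> real \<Rightarrow> ('x::finite \<Rightarrow> 'y::finite \<Rightarrow> nat) \<Rightarrow> 'x \<Rightarrow> 'y \<Rightarrow> real" where
  "guess_pmf q \<rho> G x y =
     1 / (real CARD('y) * (\<Sum>i=1..CARD('x). real i powr (-(1 + \<rho>) / q))
          * real (G x y) powr ((1 + \<rho>) / q))"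

end

theory Submission
  imports Defs "HOL-Analysis.Convex"
begin


lemma harm_bound:
  assumes "n \<ge> 1" shows "(\<Sum>i=1..n. 1 / real i) \<le> 1 + ln (real n)"
  using assms
proof (induction n rule: dec_induct)
  case base then show ?case by simp
next
  case (step m)
  have m: "real m \<ge> 1" using step by simp
  have "ln (real m / (real m + 1)) \<le> real m / (real m + 1) - 1"
    by (rule ln_le_minus_one) (use m in auto)
  moreover have "ln (real m / (real m + 1)) = ln (real m) - ln (real m + 1)"
    using m by (simp add: ln_div)
  moreover have "real m / (real m + 1) - 1 = - (1 / (real m + 1))"
    using m by (simp add: field_simps)
  ultimately have "1 / (real m + 1) \<le> ln (real m + 1) - ln (real m)" by linarith
  then show ?case using step by (simp add: add.commute)
qed

lemma inv_sum:
  fixes g :: "'x::finite \<Rightarrow> nat"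
  assumes "bij_betw g UNIV {1..n}"
  shows "(\<Sum>x\<in>UNIV. 1 / real (g x)) = (\<Sum>i=1..n. 1 / real i)"
  using sum.reindex_bij_betw[OF assms, of "\<lambda>i. 1 / real i"] by simp

lemma g_pos:
  fixes g :: "'x::finite \<Rightarrow> nat"
  assumes "bij_betw g UNIV {1..n}"
  shows "g x \<ge> 1"
  using assms by (auto simp: bij_betw_def)

lemma jensen_part:
  fixes g :: "'x::finite \<Rightarrow> nat" and a :: "'x \<Rightarrow> real"
  assumes bij: "bij_betw g UNIV {1..CARD('x)}" and apos: "\<And>x. a x > 0" and rho: "\<rho> > 0"
  shows "(\<Sum>x\<in>UNIV. a x) powr (1+\<rho>) \<le> (\<Sum>i=1..CARD('x). 1 / real i) powr \<rho> * (\<Sum>x\<in>UNIV. a x powr (1+\<rho>) * real (g x) powr \<rho>)"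
proof -
  define H where "H = (\<Sum>i=1..CARD('x). 1 / real i)"
  have Hpos: "H > 0" unfolding H_def by (intro sum_pos) auto
  have gp: "\<And>x. real (g x) > 0" using g_pos[OF bij] by (simp add: Suc_le_eq)
  define w where "w x = 1 / (real (g x) * H)" for x
  define b where "b x = a x * real (g x) * H" for x
  have sw: "(\<Sum>x\<in>UNIV. w x) = 1"
  proof -
    have "(\<Sum>x\<in>UNIV. w x) = (\<Sum>x\<in>UNIV. 1 / real (g x)) / H"
      unfolding w_def by (simp add: sum_divide_distrib)
    then show ?thesis using inv_sum[OF bij] Hpos unfolding H_def by simp
  qed
  have wb: "\<And>x. w x * b x = a x" using gp Hpos unfolding w_def b_def by (simp add: field_simps)
  have "(\<lambda>t. t powr (1+\<rho>)) (\<Sum>x\<in>UNIV. w x *\<^sub>R b x) \<le> (\<Sum>x\<in>UNIV. w x * (\<lambda>t. t powr (1+\<rho>)) (b x))"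
    apply (rule convex_on_sum[where C="{0<..}"])
    using sw powr_convex[of "1+\<rho>"] rho gp Hpos apos unfolding w_def b_def by auto
  moreover have "(\<Sum>x\<in>UNIV. w x *\<^sub>R b x) = (\<Sum>x\<in>UNIV. a x)" using wb by simp
  moreover have "w x * b x powr (1+\<rho>) = H powr \<rho> * (a x powr (1+\<rho>) * real (g x) powr \<rho>)" for x
  proof -
    have "b x powr (1+\<rho>) = a x powr (1+\<rho>) * (real (g x) * H) powr (1+\<rho>)"
      unfolding b_def using apos[of x] gp[of x] Hpos by (simp add: powr_mult mult.assoc)
    also have "(real (g x) * H) powr (1+\<rho>) = (real (g x) * H) * (real (g x) powr \<rho> * H powr \<rho>)"
      using gp[of x] Hpos by (simp add: powr_add powr_mult)
    finally show ?thesis unfolding w_def using gp[of x] Hpos by (simp add: field_simps)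
  qed
  ultimately show ?thesis by (simp add: H_def sum_distrib_left)
qed

lemma arikan_part:
  fixes g :: "'x::finite \<Rightarrow> nat" and a :: "'x \<Rightarrow> real"
  assumes bij: "bij_betw g UNIV {1..CARD('x)}" and apos: "\<And>x. a x > 0" and rho: "\<rho> > 0"
    and ord: "\<And>x x'. g x < g x' \<Longrightarrow> a x' \<le> a x"
  shows "(\<Sum>x\<in>UNIV. a x powr (1+\<rho>) * real (g x) powr \<rho>) \<le> (\<Sum>x\<in>UNIV. a x) powr (1+\<rho>)"
proof -
  define A where "A = (\<Sum>x\<in>UNIV. a x)"
  have Apos: "A > 0" unfolding A_def using apos by (intro sum_pos) auto
  have inj: "inj g" using bij by (simp add: bij_betw_def)
  have gle: "real (g x) \<le> A / a x" for x
  proof -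
    define S where "S = {x'. g x' \<le> g x}"
    have "g ` S = {1..g x}"
    proof
      show "g ` S \<subseteq> {1..g x}" using g_pos[OF bij] unfolding S_def by auto
      show "{1..g x} \<subseteq> g ` S"
      proof
        fix k assume k: "k \<in> {1..g x}"
        have "g x \<le> CARD('x)" using bij by (auto simp: bij_betw_def)
        then have "k \<in> g ` UNIV" using bij k by (auto simp: bij_betw_def)
        then obtain x' where "k = g x'" by auto
        then show "k \<in> g ` S" using k unfolding S_def by auto
      qed
    qed
    then have cS: "card S = g x" using card_image[OF inj_on_subset[OF inj]] by (metis card_atLeastAtMost diff_Suc_1 subset_UNIV)
    have "real (g x) = (\<Sum>x'\<in>S. 1)" using cS by simp
    also have "\<dots> \<le> (\<Sum>x'\<in>S. a x' / a x)"
    proof (rule sum_mono)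
      fix x' assume "x' \<in> S"
      then have "g x' < g x \<or> x' = x" unfolding S_def using inj by (auto simp: inj_def order_le_less)
      then have "a x \<le> a x'" using ord by auto
      then show "1 \<le> a x' / a x" using apos[of x] by simp
    qed
    also have "\<dots> \<le> (\<Sum>x'\<in>UNIV. a x' / a x)"
      by (rule sum_mono2) (use apos in \<open>auto intro: less_imp_le\<close>)
    also have "\<dots> = A / a x" unfolding A_def by (simp add: sum_divide_distrib)
    finally show ?thesis .
  qed
  have "a x powr (1+\<rho>) * real (g x) powr \<rho> \<le> a x * A powr \<rho>" for x
  proof -
    have "real (g x) powr \<rho> \<le> (A / a x) powr \<rho>"
      by (rule powr_mono2) (use rho gle in auto)
    then have "a x powr (1+\<rho>) * real (g x) powr \<rho> \<le> a x powr (1+\<rho>) * (A / a x) powr \<rho>"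
      using apos[of x] by (simp add: mult_left_mono)
    also have "\<dots> = a x * A powr \<rho>"
      using apos[of x] Apos by (simp add: powr_add powr_divide)
    finally show ?thesis .
  qed
  then have "(\<Sum>x\<in>UNIV. a x powr (1+\<rho>) * real (g x) powr \<rho>) \<le> (\<Sum>x\<in>UNIV. a x * A powr \<rho>)"
    by (rule sum_mono)
  also have "\<dots> = A powr (1+\<rho>)" using Apos by (simp add: sum_distrib_right[symmetric] A_def powr_add)
  finally show ?thesis unfolding A_def .
qed


theorem theorem6:
  fixes P :: "'x::finite \<Rightarrow> 'y::finite \<Rightarrow> real"
    and G Gs :: "'x \<Rightarrow> 'y \<Rightarrow> nat"
    and q \<rho> :: real
  assumes P_pos: "\<forall>x y. P x y > 0"
    and P_sum: "(\<Sum>x\<in>UNIV. \<Sum>y\<in>UNIV. P x y) = 1"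
    and rho_pos: "\<rho> > 0"
    and q_nz: "q \<noteq> 0"
    and G_guess: "cond_guessing G"
    and Gs_opt: "optimal_guessing q P Gs"
  shows "\<bar>redundancy q \<rho> P G Gs - q * cond_rel_entropy (q / (1 + \<rho>)) q P (guess_pmf q \<rho> G)\<bar>
           \<le> ln (1 + ln (real CARD('x)))"
proof -
  define n where "n = CARD('x)"
  define \<alpha> where "\<alpha> = q / (1 + \<rho>)"
  define H where "H = (\<Sum>i=1..n. 1 / real i)"
  have n1: "n \<ge> 1" unfolding n_def by (simp add: Suc_le_eq)
  have Hpos: "H > 0" unfolding H_def using n1 by (intro sum_pos) auto
  have Hle: "H \<le> 1 + ln (real n)" unfolding H_def using harm_bound[OF n1] .
  have H1: "H \<ge> 1"
  proof -
    have "H = 1 + (\<Sum>i=2..n. 1 / real i)" unfolding H_def using n1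
      by (simp add: sum.atLeast_Suc_atMost numeral_2_eq_2)
    moreover have "(\<Sum>i=2..n. 1 / real i) \<ge> 0" by (intro sum_nonneg) auto
    ultimately show ?thesis by simp
  qed
  have Gb: "\<And>y. bij_betw (\<lambda>x. G x y) UNIV {1..n}" using G_guess unfolding cond_guessing_def n_def by auto
  have Gsb: "\<And>y. bij_betw (\<lambda>x. Gs x y) UNIV {1..n}" using Gs_opt unfolding optimal_guessing_def cond_guessing_def n_def by auto
  have Gpos: "\<And>x y. real (G x y) > 0" using g_pos[OF Gb] by (simp add: Suc_le_eq)
  have Gspos: "\<And>x y. real (Gs x y) > 0" using g_pos[OF Gsb] by (simp add: Suc_le_eq)
  have Pp: "\<And>x y. P x y > 0" using P_pos by auto
  have Pne: "\<And>x y. P x y \<noteq> 0" using Pp by (metis less_irrefl)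
  have Gn: "\<And>x y. G x y \<noteq> 0" "\<And>x y. Gs x y \<noteq> 0" using Gpos Gspos by (metis of_nat_0 less_irrefl)+
  have Gsn: "True" by simp
  have Pq: "P x y powr q = (P x y powr \<alpha>) powr (1+\<rho>)" for x y
    using rho_pos by (simp add: powr_powr \<alpha>_def)
  define SG where "SG F = (\<Sum>y\<in>UNIV. \<Sum>x\<in>UNIV. (P x y powr \<alpha>) powr (1+\<rho>) * real (F x y) powr \<rho>)" for F :: "'x \<Rightarrow> 'y \<Rightarrow> nat"
  define D where "D = (\<Sum>y\<in>UNIV. (\<Sum>x\<in>UNIV. P x y powr \<alpha>) powr (1+\<rho>))"
  have SGpos: "SG G > 0" "SG Gs > 0" unfolding SG_def using Pp Gpos Gspos by (auto intro!: sum_pos mult_pos_pos simp: Pne Gn Gsn)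
  have Dpos: "D > 0" unfolding D_def
  proof (intro sum_pos)
    fix y :: 'y
    have "(\<Sum>x\<in>UNIV. P x y powr \<alpha>) > 0" using Pp by (intro sum_pos) (auto simp: Pne)
    then show "(\<Sum>x\<in>UNIV. P x y powr \<alpha>) powr (1+\<rho>) > 0" by simp
  qed auto
  have ord: "P x' y powr \<alpha> \<le> P x y powr \<alpha>" if "Gs x y < Gs x' y" for x x' y
  proof -
    define S where "S = (\<Sum>z\<in>UNIV. P z y)"
    define T where "T = (\<Sum>z\<in>UNIV. cond_prob P z y powr q)"
    have Spos: "S > 0" unfolding S_def using Pp by (intro sum_pos) (auto simp: Pne)
    have Tpos: "T > 0" unfolding T_def cond_prob_def using Pp Spos by (intro sum_pos) (auto simp: Pne S_def[symmetric])
    have "cond_prob_q q P x' y \<le> cond_prob_q q P x y" using Gs_opt that unfolding optimal_guessing_def by auto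
    then have "cond_prob P x' y powr q / T \<le> cond_prob P x y powr q / T"
      unfolding cond_prob_q_def T_def .
    then have "cond_prob P x' y powr q \<le> cond_prob P x y powr q" using Tpos by (simp add: divide_le_cancel)
    then have hh: "(P x' y / S) powr q \<le> (P x y / S) powr q"
      unfolding cond_prob_def S_def .
    have "((P x' y / S) powr q) powr (1/(1+\<rho>)) \<le> ((P x y / S) powr q) powr (1/(1+\<rho>))"
      by (rule powr_mono2) (use rho_pos hh in auto)
    then have "(P x' y / S) powr \<alpha> \<le> (P x y / S) powr \<alpha>"
      by (simp add: powr_powr \<alpha>_def)
    then show ?thesis using Spos Pp[of x y] Pp[of x' y] 
      by (simp add: powr_divide divide_le_cancel)
  qed
  have b1: "SG Gs \<le> D"
    unfolding SG_def D_def
    by (rule sum_mono, rule arikan_part[OF Gsb[unfolded n_def]]) (use Pp rho_pos ord in \<open>auto simp: Pne\<close>)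
  have dd: "H powr \<rho> * SG Gs = (\<Sum>y\<in>UNIV. H powr \<rho> * (\<Sum>x\<in>UNIV. (P x y powr \<alpha>) powr (1+\<rho>) * real (Gs x y) powr \<rho>))"
    unfolding SG_def by (rule sum_distrib_left)
  have b2: "D \<le> H powr \<rho> * SG Gs"
    unfolding dd unfolding D_def H_def n_def
    by (rule sum_mono, rule jensen_part[OF Gsb[unfolded n_def]]) (use Pp rho_pos in \<open>auto simp: Pne\<close>)
  have EqG: "Eq q P (\<lambda>x y. real (F x y) powr \<rho>) = SG F / (\<Sum>x\<in>UNIV. \<Sum>y\<in>UNIV. P x y powr q)" for F
  proof -
    have "(\<Sum>x\<in>UNIV. \<Sum>y\<in>UNIV. real (F x y) powr \<rho> * P x y powr q) = SG F"
      unfolding SG_def Pq by (subst sum.swap) (auto intro!: sum.cong simp: mult.commute)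
    then show ?thesis unfolding Eq_def by simp
  qed
  have Zpos: "(\<Sum>x\<in>UNIV. \<Sum>y\<in>UNIV. P x y powr q) > 0" using Pp by (intro sum_pos) (auto simp: Pne)
  have red: "redundancy q \<rho> P G Gs = 1/\<rho> * (ln (SG G) - ln (SG Gs))"
    unfolding redundancy_def EqG using SGpos Zpos by (simp add: ln_div algebra_simps)
  have re: "q * cond_rel_entropy \<alpha> q P (guess_pmf q \<rho> G) = 1/\<rho> * ln (H powr \<rho> * SG G / D)"
  proof -
    define K where "K = real CARD('y) * (\<Sum>i=1..CARD('x). real i powr (-(1+\<rho>)/q))"
    have Kpos: "K > 0" unfolding K_def using n1 n_def by (auto intro!: mult_pos_pos sum_pos)
    have aux: "(1/(K * g powr e)) powr t = K powr (-t) * g powr (-(e*t))" if "g > 0" for g e t :: real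
      using Kpos that by (simp add: powr_divide powr_mult powr_powr powr_minus divide_inverse inverse_powr mult.commute)
    have Qd: "guess_pmf q \<rho> G x y = 1/(K * real (G x y) powr ((1+\<rho>)/q))" for x y
      unfolding guess_pmf_def K_def by simp
    have qr0: "q * (1+\<rho>) \<noteq> 0" using q_nz rho_pos by simp
    have qr: "q + \<rho> * q \<noteq> 0" "1 + \<rho> \<noteq> 0" "q + q * \<rho> \<noteq> 0" using qr0 rho_pos by (simp_all add: algebra_simps)
    have e1: "(1+\<rho>)/q * (\<alpha> - q) = -\<rho>" unfolding \<alpha>_def using q_nz rho_pos qr by (simp add: field_simps)
    have e2: "(1+\<rho>)/q * \<alpha> = 1" unfolding \<alpha>_def using q_nz rho_pos qr by (simp add: field_simps)
    have Q1: "guess_pmf q \<rho> G x y powr (\<alpha> - q) = K powr (q - \<alpha>) * real (G x y) powr \<rho>" for x y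
      unfolding Qd aux[OF Gpos] e1 by simp
    have Q2: "guess_pmf q \<rho> G x y powr \<alpha> = K powr (-\<alpha>) * (1 / real (G x y))" for x y
      unfolding Qd aux[OF Gpos] e2 using Gpos[of x y] by (simp add: powr_minus divide_inverse)
    have S2: "(\<Sum>x\<in>UNIV. guess_pmf q \<rho> G x y powr \<alpha>) = K powr (-\<alpha>) * H" for y
      unfolding Q2 sum_distrib_left[symmetric] H_def using inv_sum[OF Gb] by simp
    have ex1: "q / \<alpha> - 1 = \<rho>" and ex2: "q / \<alpha> = 1 + \<rho>"
      unfolding \<alpha>_def using q_nz rho_pos qr by (simp_all add: field_simps)
    have Kc: "K powr (q - \<alpha>) * (K powr (-\<alpha>)) powr \<rho> = 1"
    proof -
      have "q - \<alpha> + (-\<alpha>) * \<rho> = 0" unfolding \<alpha>_def using rho_pos qr by (simp add: field_simps)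
      then show ?thesis using Kpos by (simp add: powr_powr powr_add[symmetric])
    qed
    have trm: "(\<Sum>x\<in>UNIV. P x y powr q * guess_pmf q \<rho> G x y powr (\<alpha> - q))
        * (\<Sum>x\<in>UNIV. guess_pmf q \<rho> G x y powr \<alpha>) powr (q / \<alpha> - 1)
        = H powr \<rho> * (\<Sum>x\<in>UNIV. (P x y powr \<alpha>) powr (1+\<rho>) * real (G x y) powr \<rho>)" for y
    proof -
      define Sx where "Sx = (\<Sum>x\<in>UNIV. (P x y powr \<alpha>) powr (1+\<rho>) * real (G x y) powr \<rho>)"
      have 1: "(\<Sum>x\<in>UNIV. P x y powr q * guess_pmf q \<rho> G x y powr (\<alpha> - q))
          = K powr (q - \<alpha>) * Sx"
        unfolding Q1 Pq sum_distrib_left Sx_def by (auto intro!: sum.cong)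
      have 2: "(K powr (-\<alpha>) * H) powr \<rho> = (K powr (-\<alpha>)) powr \<rho> * H powr \<rho>"
        using Kpos Hpos by (simp add: powr_mult)
      have "K powr (q - \<alpha>) * Sx * ((K powr (-\<alpha>)) powr \<rho> * H powr \<rho>)
          = (K powr (q - \<alpha>) * (K powr (-\<alpha>)) powr \<rho>) * (H powr \<rho> * Sx)"
        by (simp only: mult_ac)
      also have "\<dots> = H powr \<rho> * Sx" unfolding Kc by simp
      finally show ?thesis unfolding S2 ex1 1 2 Sx_def .
    qed
    have num: "(\<Sum>y\<in>UNIV. (\<Sum>x\<in>UNIV. P x y powr q * guess_pmf q \<rho> G x y powr (\<alpha> - q))
        * (\<Sum>x\<in>UNIV. guess_pmf q \<rho> G x y powr \<alpha>) powr (q / \<alpha> - 1)) = H powr \<rho> * SG G"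
      unfolding trm SG_def by (simp add: sum_distrib_left)
    have den: "(\<Sum>y\<in>UNIV. (\<Sum>x\<in>UNIV. P x y powr \<alpha>) powr (q / \<alpha>)) = D"
      unfolding ex2 D_def ..
    have qq: "q * q > 0" using q_nz by (auto simp add: zero_less_mult_iff linorder_neq_iff)
    have "\<rho> * (q*q) * (1+\<rho>) > 0" using mult_pos_pos[OF mult_pos_pos[OF rho_pos qq], of "1+\<rho>"] rho_pos by simp
    then have qr2: "\<rho> * (q * q) + \<rho> * (\<rho> * (q * q)) \<noteq> 0" by (simp add: algebra_simps)
    have coef: "q * (\<alpha> / (q * (q - \<alpha>))) = 1/\<rho>"
      unfolding \<alpha>_def using q_nz rho_pos qr qr2 by (simp add: field_simps)
    show ?thesis unfolding cond_rel_entropy_def num den mult.assoc[symmetric] coef by simp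
  qed
  have key: "redundancy q \<rho> P G Gs - q * cond_rel_entropy \<alpha> q P (guess_pmf q \<rho> G)
      = 1/\<rho> * (ln D - ln (SG Gs)) - ln H"
    unfolding red re using SGpos Dpos Hpos rho_pos
    by (simp add: ln_div ln_mult ln_powr field_simps)
  have l1: "ln (SG Gs) \<le> ln D" using b1 SGpos by simp
  have l2: "ln D \<le> \<rho> * ln H + ln (SG Gs)"
  proof -
    have "ln D \<le> ln (H powr \<rho> * SG Gs)" using b2 Dpos by simp
    also have "\<dots> = ln (H powr \<rho>) + ln (SG Gs)" using Hpos SGpos by (simp add: ln_mult)
    also have "ln (H powr \<rho>) = \<rho> * ln H" using Hpos by (simp add: ln_powr)
    finally show ?thesis .
  qed
  have "0 \<le> 1/\<rho> * (ln D - ln (SG Gs))" using l1 rho_pos by simp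
  moreover have "1/\<rho> * (ln D - ln (SG Gs)) \<le> ln H"
    using l2 rho_pos by (simp add: field_simps)
  moreover have "ln H \<le> ln (1 + ln (real n))" using Hle Hpos by simp
  moreover have "ln H \<ge> 0" using H1 by simp
  ultimately show ?thesis using key unfolding \<alpha>_def n_def by linarith
qed

end
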